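(* Let $G$ be a finite transitive permutation group on a set $V$ whose point stabilizers have order $2$ or $3$. Then the complement $\overline{\Gamma_G}$ of the derangement graph of $G$ is arc-transitive.
   Context: An element of $G$ is a derangement if it fixes no point of $V$. Let $\mathcal{D}$ be the set of derangements of $G$. The derangement graph $\Gamma_G=\mathrm{Cay}(G,\mathcal{D})$ is the graph with vertex set $G$ in which $g,h\in G$ are adjacent if and only if $g^{-1}h \in \mathcal{D}$; $\overline{\Gamma_G}$ is its complement graph (distinct $g,h$ adjacent iff $g^{-1}h$ fixes some point). *)

theory Defs
  imports "HOL-Algebra.Bij" "HOL-Algebra.Group"
begin

definition transitive_on :: "'a set \<Rightarrow> ('a \<Rightarrow> 'a) set \<Rightarrow> bool" where
  "transitive_on V G \<longleftrightarrow> (\<forall>u\<in>V. \<forall>w\<in>V. \<exists>g\<in>G. g u = w)"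

definition stabilizer :: "'a set \<Rightarrow> ('a \<Rightarrow> 'a) set \<Rightarrow> 'a \<Rightarrow> ('a \<Rightarrow> 'a) set" where
  "stabilizer V G v = {g \<in> G. g v = v}"

definition derangement :: "'a set \<Rightarrow> ('a \<Rightarrow> 'a) \<Rightarrow> bool" where
  "derangement V g \<longleftrightarrow> (\<forall>v\<in>V. g v \<noteq> v)"

text \<open>Adjacency in the complement of the derangement graph Cay(G, D):
  distinct g, h adjacent iff g^-1 h fixes some point.\<close>
definition compl_derangement_adj :: "'a set \<Rightarrow> ('a \<Rightarrow> 'a) \<Rightarrow> ('a \<Rightarrow> 'a) \<Rightarrow> bool" where
  "compl_derangement_adj V g h \<longleftrightarrow>
     g \<noteq> h \<and> \<not> derangement V (inv\<^bsub>BijGroup V\<^esub> g \<otimes>\<^bsub>BijGroup V\<^esub> h)"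

definition graph_automorphism :: "'v set \<Rightarrow> ('v \<Rightarrow> 'v \<Rightarrow> bool) \<Rightarrow> ('v \<Rightarrow> 'v) \<Rightarrow> bool" where
  "graph_automorphism X E \<sigma> \<longleftrightarrow>
     bij_betw \<sigma> X X \<and> (\<forall>x\<in>X. \<forall>y\<in>X. E x y \<longleftrightarrow> E (\<sigma> x) (\<sigma> y))"

definition arc_transitive :: "'v set \<Rightarrow> ('v \<Rightarrow> 'v \<Rightarrow> bool) \<Rightarrow> bool" where
  "arc_transitive X E \<longleftrightarrow>
     (\<forall>a\<in>X. \<forall>b\<in>X. \<forall>c\<in>X. \<forall>d\<in>X. E a b \<and> E c d \<longrightarrow>
        (\<exists>\<sigma>. graph_automorphism X E \<sigma> \<and> \<sigma> a = c \<and> \<sigma> b = d))"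

end

theory Submission
  imports Defs
begin

lemma carr_Bij: "carrier (BijGroup V) = Bij V"
  by (simp add: BijGroup_def)

lemma mult_apply:
  "x \<in> Bij V \<Longrightarrow> y \<in> Bij V \<Longrightarrow> v \<in> V \<Longrightarrow> (x \<otimes>\<^bsub>BijGroup V\<^esub> y) v = x (y v)"
  by (simp add: BijGroup_def compose_def)

lemma inv_apply:
  "x \<in> Bij V \<Longrightarrow> v \<in> V \<Longrightarrow> (inv\<^bsub>BijGroup V\<^esub> x) v = inv_into V x v"
  by (simp add: inv_BijGroup)

lemma Bij_in: "x \<in> Bij V \<Longrightarrow> v \<in> V \<Longrightarrow> x v \<in> V"
  by (meson Bij_imp_funcset funcset_mem)

lemma Bij_bij: "x \<in> Bij V \<Longrightarrow> bij_betw x V V"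
  by (simp add: Bij_def)

lemma inv_into_eq_iff:
  assumes "x \<in> Bij V" "u \<in> V" "v \<in> V"
  shows "inv_into V x u = v \<longleftrightarrow> u = x v"
proof -
  have b: "bij_betw x V V" using assms Bij_bij by blast
  show ?thesis
  proof
    assume "inv_into V x u = v"
    then show "u = x v" using b assms
      by (metis bij_betw_def f_inv_into_f)
  next
    assume "u = x v"
    then show "inv_into V x u = v" using b assms
      by (simp add: bij_betw_def inv_into_f_f)
  qed
qed

lemma adj_iff:
  assumes "x \<in> Bij V" "y \<in> Bij V"
  shows "compl_derangement_adj V x y \<longleftrightarrow> x \<noteq> y \<and> (\<exists>v\<in>V. x v = y v)"
proof -
  have "(inv\<^bsub>BijGroup V\<^esub> x \<otimes>\<^bsub>BijGroup V\<^esub> y) v = v \<longleftrightarrow> x v = y v" if "v \<in> V" for v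
  proof -
    have ix: "inv\<^bsub>BijGroup V\<^esub> x \<in> Bij V"
      using assms group.inv_closed[OF group_BijGroup] carr_Bij by metis
    have "(inv\<^bsub>BijGroup V\<^esub> x \<otimes>\<^bsub>BijGroup V\<^esub> y) v = inv_into V x (y v)"
      using mult_apply[OF ix assms(2) that] inv_apply[OF assms(1) Bij_in[OF assms(2) that]] by simp
    then show ?thesis using inv_into_eq_iff[OF assms(1) Bij_in[OF assms(2) that] that] by auto
  qed
  then show ?thesis unfolding compl_derangement_adj_def derangement_def by auto
qed

lemma aut_comp:
  assumes "graph_automorphism X E s" "graph_automorphism X E t"
  shows "graph_automorphism X E (s \<circ> t)"
  using assms unfolding graph_automorphism_def
  by (auto simp: bij_betw_trans bij_betw_imp_funcset funcset_mem) (meson bij_betwE)+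

lemma aut_mult:
  assumes sg: "subgroup G (BijGroup V)" and p: "p \<in> G" and q: "q \<in> G"
  shows "graph_automorphism G (compl_derangement_adj V)
           (\<lambda>x. p \<otimes>\<^bsub>BijGroup V\<^esub> x \<otimes>\<^bsub>BijGroup V\<^esub> q)"
proof -
  interpret H: group "BijGroup V" by (rule group_BijGroup)
  have GB: "G \<subseteq> Bij V" using sg subgroup.subset carr_Bij by metis
  have pc: "p \<in> carrier (BijGroup V)" "q \<in> carrier (BijGroup V)" using p q GB carr_Bij by auto
  have bij: "bij_betw (\<lambda>x. p \<otimes>\<^bsub>BijGroup V\<^esub> x \<otimes>\<^bsub>BijGroup V\<^esub> q) G G"
  proof (rule bij_betwI[where g = "\<lambda>y. inv\<^bsub>BijGroup V\<^esub> p \<otimes>\<^bsub>BijGroup V\<^esub> y \<otimes>\<^bsub>BijGroup V\<^esub> inv\<^bsub>BijGroup V\<^esub> q"])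
    show "(\<lambda>x. p \<otimes>\<^bsub>BijGroup V\<^esub> x \<otimes>\<^bsub>BijGroup V\<^esub> q) \<in> G \<rightarrow> G"
      using sg p q by (auto intro: subgroup.m_closed)
    show "(\<lambda>y. inv\<^bsub>BijGroup V\<^esub> p \<otimes>\<^bsub>BijGroup V\<^esub> y \<otimes>\<^bsub>BijGroup V\<^esub> inv\<^bsub>BijGroup V\<^esub> q) \<in> G \<rightarrow> G"
      using sg p q by (auto intro!: subgroup.m_closed subgroup.m_inv_closed)
  next
    fix x assume "x \<in> G"
    then have "x \<in> carrier (BijGroup V)" using GB carr_Bij by auto
    then show "inv\<^bsub>BijGroup V\<^esub> p \<otimes>\<^bsub>BijGroup V\<^esub> (p \<otimes>\<^bsub>BijGroup V\<^esub> x \<otimes>\<^bsub>BijGroup V\<^esub> q) \<otimes>\<^bsub>BijGroup V\<^esub> inv\<^bsub>BijGroup V\<^esub> q = x"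
      using pc by (simp add: H.m_assoc H.l_inv H.r_inv flip: H.m_assoc) (simp add: H.m_assoc)
  next
    fix x assume "x \<in> G"
    then have "x \<in> carrier (BijGroup V)" using GB carr_Bij by auto
    then show "p \<otimes>\<^bsub>BijGroup V\<^esub> (inv\<^bsub>BijGroup V\<^esub> p \<otimes>\<^bsub>BijGroup V\<^esub> x \<otimes>\<^bsub>BijGroup V\<^esub> inv\<^bsub>BijGroup V\<^esub> q) \<otimes>\<^bsub>BijGroup V\<^esub> q = x"
      using pc by (simp add: H.m_assoc H.l_inv H.r_inv flip: H.m_assoc) (simp add: H.m_assoc)
  qed
  have adj: "compl_derangement_adj V x y \<longleftrightarrow>
     compl_derangement_adj V (p \<otimes>\<^bsub>BijGroup V\<^esub> x \<otimes>\<^bsub>BijGroup V\<^esub> q) (p \<otimes>\<^bsub>BijGroup V\<^esub> y \<otimes>\<^bsub>BijGroup V\<^esub> q)"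
    if x: "x \<in> G" and y: "y \<in> G" for x y
  proof -
    have xc: "x \<in> carrier (BijGroup V)" "y \<in> carrier (BijGroup V)" using x y GB carr_Bij by auto
    have ne: "p \<otimes>\<^bsub>BijGroup V\<^esub> x \<otimes>\<^bsub>BijGroup V\<^esub> q \<noteq> p \<otimes>\<^bsub>BijGroup V\<^esub> y \<otimes>\<^bsub>BijGroup V\<^esub> q \<longleftrightarrow> x \<noteq> y"
      proof -
      have "p \<otimes>\<^bsub>BijGroup V\<^esub> x \<otimes>\<^bsub>BijGroup V\<^esub> q = p \<otimes>\<^bsub>BijGroup V\<^esub> y \<otimes>\<^bsub>BijGroup V\<^esub> q \<longleftrightarrow> p \<otimes>\<^bsub>BijGroup V\<^esub> x = p \<otimes>\<^bsub>BijGroup V\<^esub> y"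
        using xc pc H.right_cancel H.m_closed by metis
      also have "\<dots> \<longleftrightarrow> x = y" using xc pc H.Units_l_cancel H.Units_eq by metis
      finally show ?thesis by blast
    qed
    have pb: "p \<in> Bij V" "q \<in> Bij V" and xb: "x \<in> Bij V" "y \<in> Bij V" using pc xc carr_Bij by auto
    have ev: "(p \<otimes>\<^bsub>BijGroup V\<^esub> z \<otimes>\<^bsub>BijGroup V\<^esub> q) v = p (z (q v))" if "z \<in> Bij V" "v \<in> V" for z v
    proof -
      have pz: "p \<otimes>\<^bsub>BijGroup V\<^esub> z \<in> Bij V" using H.m_closed[of p z] that pb by (simp add: carr_Bij)
      have "(p \<otimes>\<^bsub>BijGroup V\<^esub> z \<otimes>\<^bsub>BijGroup V\<^esub> q) v = (p \<otimes>\<^bsub>BijGroup V\<^esub> z) (q v)"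
        using mult_apply[OF pz pb(2) that(2)] .
      also have "\<dots> = p (z (q v))" using mult_apply[OF pb(1) that(1) Bij_in[OF pb(2) that(2)]] .
      finally show ?thesis .
    qed
    have pinj: "inj_on p V" using pb Bij_bij bij_betw_def by blast
    have ex: "(\<exists>v\<in>V. p (x (q v)) = p (y (q v))) \<longleftrightarrow> (\<exists>u\<in>V. x u = y u)"
    proof
      assume "\<exists>v\<in>V. p (x (q v)) = p (y (q v))"
      then obtain v where v: "v \<in> V" "p (x (q v)) = p (y (q v))" by blast
      have qv: "q v \<in> V" using Bij_in[OF pb(2) v(1)] .
      note v(2)
      moreover have "x (q v) \<in> V" "y (q v) \<in> V" "q v \<in> V" using Bij_in[OF xb(1) qv] Bij_in[OF xb(2) qv] qv by auto
      ultimately have "x (q v) = y (q v)" using pinj by (meson inj_onD)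
      then show "\<exists>u\<in>V. x u = y u" using \<open>q v \<in> V\<close> by blast
    next
      assume "\<exists>u\<in>V. x u = y u"
      then obtain u where u: "u \<in> V" "x u = y u" by blast
      have "q ` V = V" using Bij_bij[OF pb(2)] by (simp add: bij_betw_def)
      then have "u \<in> q ` V" using u(1) by simp
      then obtain v where v: "v \<in> V" "q v = u" by (rule imageE) simp
      then have "p (x (q v)) = p (y (q v))" using u(2) by simp
      then show "\<exists>v\<in>V. p (x (q v)) = p (y (q v))" using v(1) by blast
    qed
    have mb: "p \<otimes>\<^bsub>BijGroup V\<^esub> z \<otimes>\<^bsub>BijGroup V\<^esub> q \<in> Bij V" if "z \<in> Bij V" for z
      using H.m_closed[of p z] H.m_closed[of "p \<otimes>\<^bsub>BijGroup V\<^esub> z" q] that pb by (simp add: carr_Bij)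
    have e2: "(\<exists>v\<in>V. (p \<otimes>\<^bsub>BijGroup V\<^esub> x \<otimes>\<^bsub>BijGroup V\<^esub> q) v = (p \<otimes>\<^bsub>BijGroup V\<^esub> y \<otimes>\<^bsub>BijGroup V\<^esub> q) v)
       \<longleftrightarrow> (\<exists>v\<in>V. p (x (q v)) = p (y (q v)))" using ev xb by simp
    show ?thesis unfolding adj_iff[OF mb[OF xb(1)] mb[OF xb(2)]] adj_iff[OF xb] e2 ex ne by blast
  qed
  show ?thesis unfolding graph_automorphism_def using bij adj by blast
qed


lemma aut_inv:
  assumes sg: "subgroup G (BijGroup V)"
  shows "graph_automorphism G (compl_derangement_adj V) (\<lambda>x. inv\<^bsub>BijGroup V\<^esub> x)"
proof -
  interpret H: group "BijGroup V" by (rule group_BijGroup)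
  have GB: "G \<subseteq> carrier (BijGroup V)" using sg subgroup.subset by blast
  have bij: "bij_betw (\<lambda>x. inv\<^bsub>BijGroup V\<^esub> x) G G"
  proof (rule bij_betwI[where g = "\<lambda>x. inv\<^bsub>BijGroup V\<^esub> x"])
    show "(\<lambda>x. inv\<^bsub>BijGroup V\<^esub> x) \<in> G \<rightarrow> G" using sg by (auto intro: subgroup.m_inv_closed)
    then show "(\<lambda>x. inv\<^bsub>BijGroup V\<^esub> x) \<in> G \<rightarrow> G" .
  next
    fix x assume "x \<in> G" then show "inv\<^bsub>BijGroup V\<^esub> (inv\<^bsub>BijGroup V\<^esub> x) = x" using GB by auto
  next
    fix x assume "x \<in> G" then show "inv\<^bsub>BijGroup V\<^esub> (inv\<^bsub>BijGroup V\<^esub> x) = x" using GB by auto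
  qed
  have adj: "compl_derangement_adj V x y \<longleftrightarrow>
     compl_derangement_adj V (inv\<^bsub>BijGroup V\<^esub> x) (inv\<^bsub>BijGroup V\<^esub> y)"
    if x: "x \<in> G" and y: "y \<in> G" for x y
  proof -
    have xc: "x \<in> carrier (BijGroup V)" "y \<in> carrier (BijGroup V)" using x y GB by auto
    have xb: "x \<in> Bij V" "y \<in> Bij V" using xc carr_Bij by auto
    have ib: "inv\<^bsub>BijGroup V\<^esub> x \<in> Bij V" "inv\<^bsub>BijGroup V\<^esub> y \<in> Bij V"
      using H.inv_closed[OF xc(1)] H.inv_closed[OF xc(2)] carr_Bij by auto
    have ne: "inv\<^bsub>BijGroup V\<^esub> x \<noteq> inv\<^bsub>BijGroup V\<^esub> y \<longleftrightarrow> x \<noteq> y"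
      using xc by (metis H.inv_inv)
    have ex: "(\<exists>v\<in>V. (inv\<^bsub>BijGroup V\<^esub> x) v = (inv\<^bsub>BijGroup V\<^esub> y) v) \<longleftrightarrow> (\<exists>u\<in>V. x u = y u)"
    proof
      assume "\<exists>v\<in>V. (inv\<^bsub>BijGroup V\<^esub> x) v = (inv\<^bsub>BijGroup V\<^esub> y) v"
      then obtain v where v: "v \<in> V" "inv_into V x v = inv_into V y v"
        using inv_apply[OF xb(1)] inv_apply[OF xb(2)] by auto
      define u where "u = inv_into V x v"
      have u: "u \<in> V" unfolding u_def using Bij_inv_into_mem[OF xb(1) v(1)] .
      have "v = x u" using inv_into_eq_iff[OF xb(1) v(1) u] u_def by simp
      moreover have "v = y u" using inv_into_eq_iff[OF xb(2) v(1) u] u_def v(2) by simp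
      ultimately show "\<exists>u\<in>V. x u = y u" using u by metis
    next
      assume "\<exists>u\<in>V. x u = y u"
      then obtain u where u: "u \<in> V" "x u = y u" by blast
      define v where "v = x u"
      have v: "v \<in> V" unfolding v_def using Bij_in[OF xb(1) u(1)] .
      have "inv_into V x v = u" using inv_into_eq_iff[OF xb(1) v u(1)] v_def by simp
      moreover have "inv_into V y v = u" using inv_into_eq_iff[OF xb(2) v u(1)] v_def u(2) by simp
      ultimately have "(inv\<^bsub>BijGroup V\<^esub> x) v = (inv\<^bsub>BijGroup V\<^esub> y) v"
        using inv_apply[OF xb(1) v] inv_apply[OF xb(2) v] by simp
      then show "\<exists>v\<in>V. (inv\<^bsub>BijGroup V\<^esub> x) v = (inv\<^bsub>BijGroup V\<^esub> y) v" using v by blast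
    qed
    show ?thesis unfolding adj_iff[OF ib] adj_iff[OF xb] ex ne by blast
  qed
  show ?thesis unfolding graph_automorphism_def using bij adj by blast
qed

lemma (in group) stab23:
  assumes S: "S \<subseteq> carrier G" "finite S" "\<one> \<in> S"
    and inv: "\<And>a. a \<in> S \<Longrightarrow> inv a \<in> S"
    and mul: "\<And>a b. a \<in> S \<Longrightarrow> b \<in> S \<Longrightarrow> a \<otimes> b \<in> S"
    and c: "card S = 2 \<or> card S = 3"
    and st: "s \<in> S" "t \<in> S" "s \<noteq> \<one>" "t \<noteq> \<one>"
  shows "t = s \<or> t = inv s"
proof (rule ccontr)
  assume nt: "\<not> (t = s \<or> t = inv s)"
  have sub: "{\<one>, s, t} \<subseteq> S" using S st by auto
  have c3: "card {\<one>, s, t} = 3" using st nt by auto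
  have "card {\<one>, s, t} \<le> card S" using card_mono[OF S(2) sub] .
  then have "card S = 3" using c c3 by auto
  then have Seq: "S = {\<one>, s, t}" using card_subset_eq[OF S(2) sub] c3 by simp
  have sc: "s \<in> carrier G" "t \<in> carrier G" using S st by auto
  have "inv s \<in> S" using inv st by blast
  moreover have "inv s \<noteq> \<one>" using sc st by (metis inv_one inv_inv one_closed)
  ultimately have iss: "inv s = s" using Seq nt by auto
  have "s \<otimes> t \<in> S" using mul st by blast
  moreover have "s \<otimes> t \<noteq> \<one>"
  proof
    assume "s \<otimes> t = \<one>"
    then have "t = inv s" using sc by (metis inv_equality l_inv m_assoc r_one inv_closed l_one)
    then show False using nt by blast
  qed
  moreover have "s \<otimes> t \<noteq> s" using sc st by simp
  moreover have "s \<otimes> t \<noteq> t" using sc st by simp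
  ultimately show False using Seq by auto
qed


lemma (in group) alg1:
  "a \<in> carrier G \<Longrightarrow> c \<in> carrier G \<Longrightarrow> k \<in> carrier G \<Longrightarrow> c \<otimes> k \<otimes> inv a \<otimes> a \<otimes> inv k = c"
  by (simp add: m_assoc)

lemma (in group) alg2:
  "a \<in> carrier G \<Longrightarrow> b \<in> carrier G \<Longrightarrow> c \<in> carrier G \<Longrightarrow> d \<in> carrier G \<Longrightarrow> k \<in> carrier G \<Longrightarrow>
   inv c \<otimes> d = k \<otimes> (inv a \<otimes> b) \<otimes> inv k \<Longrightarrow> c \<otimes> k \<otimes> inv a \<otimes> b \<otimes> inv k = d"
proof -
  assume as: "a \<in> carrier G" "b \<in> carrier G" "c \<in> carrier G" "d \<in> carrier G" "k \<in> carrier G"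
    and e: "inv c \<otimes> d = k \<otimes> (inv a \<otimes> b) \<otimes> inv k"
  have "d = c \<otimes> (inv c \<otimes> d)" using as by (simp flip: m_assoc)
  also have "\<dots> = c \<otimes> k \<otimes> inv a \<otimes> b \<otimes> inv k" using as e by (simp add: m_assoc)
  finally show ?thesis by simp
qed

lemma (in group) alg3:
  "a \<in> carrier G \<Longrightarrow> c \<in> carrier G \<Longrightarrow> k \<in> carrier G \<Longrightarrow> c \<otimes> k \<otimes> inv a \<otimes> (a \<otimes> inv k) = c"
  by (simp add: m_assoc flip: m_assoc[of "inv a" a]) 

lemma (in group) alg4:
  "a \<in> carrier G \<Longrightarrow> b \<in> carrier G \<Longrightarrow> c \<in> carrier G \<Longrightarrow> d \<in> carrier G \<Longrightarrow> k \<in> carrier G \<Longrightarrow>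
   inv c \<otimes> d = inv (k \<otimes> (inv a \<otimes> b) \<otimes> inv k) \<Longrightarrow> c \<otimes> k \<otimes> inv b \<otimes> (a \<otimes> inv k) = d"
proof -
  assume as: "a \<in> carrier G" "b \<in> carrier G" "c \<in> carrier G" "d \<in> carrier G" "k \<in> carrier G"
    and e: "inv c \<otimes> d = inv (k \<otimes> (inv a \<otimes> b) \<otimes> inv k)"
  have "d = c \<otimes> (inv c \<otimes> d)" using as by (simp flip: m_assoc)
  also have "\<dots> = c \<otimes> (k \<otimes> (inv b \<otimes> a) \<otimes> inv k)" using as e by (simp add: inv_mult_group m_assoc)
  also have "\<dots> = c \<otimes> k \<otimes> inv b \<otimes> (a \<otimes> inv k)" using as by (simp add: m_assoc)
  finally show ?thesis by simp
qed


lemma stab_props: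
  assumes sg: "subgroup G (BijGroup V)" and w: "w \<in> V"
  shows "\<one>\<^bsub>BijGroup V\<^esub> \<in> stabilizer V G w"
    and "\<And>g. g \<in> stabilizer V G w \<Longrightarrow> inv\<^bsub>BijGroup V\<^esub> g \<in> stabilizer V G w"
    and "\<And>g h. g \<in> stabilizer V G w \<Longrightarrow> h \<in> stabilizer V G w \<Longrightarrow> g \<otimes>\<^bsub>BijGroup V\<^esub> h \<in> stabilizer V G w"
proof -
  have GB: "G \<subseteq> Bij V" using sg subgroup.subset carr_Bij by metis
  show "\<one>\<^bsub>BijGroup V\<^esub> \<in> stabilizer V G w"
    using subgroup.one_closed[OF sg] w by (simp add: stabilizer_def BijGroup_def)
  show "inv\<^bsub>BijGroup V\<^esub> g \<in> stabilizer V G w" if g: "g \<in> stabilizer V G w" for g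
  proof -
    have gG: "g \<in> G" "g w = w" using g by (auto simp: stabilizer_def)
    have gb: "g \<in> Bij V" using gG GB by blast
    have "inv_into V g w = w" using inv_into_eq_iff[OF gb w w] gG by simp
    then show ?thesis using inv_apply[OF gb w] subgroup.m_inv_closed[OF sg gG(1)]
      by (simp add: stabilizer_def)
  qed
  show "g \<otimes>\<^bsub>BijGroup V\<^esub> h \<in> stabilizer V G w"
    if g: "g \<in> stabilizer V G w" and h: "h \<in> stabilizer V G w" for g h
  proof -
    have gG: "g \<in> G" "g w = w" "h \<in> G" "h w = w" using g h by (auto simp: stabilizer_def)
    have gb: "g \<in> Bij V" "h \<in> Bij V" using gG GB by blast+
    show ?thesis using mult_apply[OF gb w] gG subgroup.m_closed[OF sg gG(1) gG(3)]
      by (simp add: stabilizer_def)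
  qed
qed

theorem lemma2p4:
  fixes V :: "'a set" and G :: "('a \<Rightarrow> 'a) set"
  assumes "subgroup G (BijGroup V)"
    and "finite G"
    and "V \<noteq> {}"
    and "transitive_on V G"
    and "\<forall>v\<in>V. card (stabilizer V G v) = 2 \<or> card (stabilizer V G v) = 3"
  shows "arc_transitive G (compl_derangement_adj V)"
  unfolding arc_transitive_def
proof (intro ballI impI)
  interpret H: group "BijGroup V" by (rule group_BijGroup)
  note sg = assms(1)
  have GB: "G \<subseteq> Bij V" using sg subgroup.subset carr_Bij by metis
  have GC: "G \<subseteq> carrier (BijGroup V)" using sg subgroup.subset by metis
  fix a b c d assume G4: "a \<in> G" "b \<in> G" "c \<in> G" "d \<in> G"
    and adj: "compl_derangement_adj V a b \<and> compl_derangement_adj V c d"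
  have ab: "a \<in> Bij V" "b \<in> Bij V" "c \<in> Bij V" "d \<in> Bij V" using G4 GB by blast+
  have ac: "a \<in> carrier (BijGroup V)" "b \<in> carrier (BijGroup V)" "c \<in> carrier (BijGroup V)" "d \<in> carrier (BijGroup V)"
    using G4 GC by blast+
  obtain v where v: "v \<in> V" "a v = b v" and anb: "a \<noteq> b" using adj adj_iff[OF ab(1,2)] by blast
  obtain w where w: "w \<in> V" "c w = d w" and cnd: "c \<noteq> d" using adj adj_iff[OF ab(3,4)] by blast
  obtain k where k: "k \<in> G" "k v = w" using assms(4) v(1) w(1) unfolding transitive_on_def by blast
  have kb: "k \<in> Bij V" and kc: "k \<in> carrier (BijGroup V)" using k GB GC by blast+
  define s where "s = inv\<^bsub>BijGroup V\<^esub> a \<otimes>\<^bsub>BijGroup V\<^esub> b"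
  define t where "t = inv\<^bsub>BijGroup V\<^esub> c \<otimes>\<^bsub>BijGroup V\<^esub> d"
  define s' where "s' = k \<otimes>\<^bsub>BijGroup V\<^esub> s \<otimes>\<^bsub>BijGroup V\<^esub> inv\<^bsub>BijGroup V\<^esub> k"
  have sG: "s \<in> G" unfolding s_def using sg G4 by (blast intro: subgroup.m_closed subgroup.m_inv_closed)
  have tG: "t \<in> G" unfolding t_def using sg G4 by (blast intro: subgroup.m_closed subgroup.m_inv_closed)
  have s'G: "s' \<in> G" unfolding s'_def using sg sG k by (blast intro: subgroup.m_closed subgroup.m_inv_closed)
  have sb: "s \<in> Bij V" "s \<in> carrier (BijGroup V)" using sG GB GC by blast+
  have iab: "inv\<^bsub>BijGroup V\<^esub> a \<in> Bij V" "inv\<^bsub>BijGroup V\<^esub> c \<in> Bij V" "inv\<^bsub>BijGroup V\<^esub> k \<in> Bij V"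
    using H.inv_closed ac kc carr_Bij by auto
  have sv: "s v = v"
  proof -
    have "s v = inv_into V a (b v)" unfolding s_def
      using mult_apply[OF iab(1) ab(2) v(1)] inv_apply[OF ab(1) Bij_in[OF ab(2) v(1)]] by simp
    then show ?thesis using inv_into_eq_iff[OF ab(1) Bij_in[OF ab(2) v(1)] v(1)] v(2) by simp
  qed
  have tw: "t w = w"
  proof -
    have "t w = inv_into V c (d w)" unfolding t_def
      using mult_apply[OF iab(2) ab(4) w(1)] inv_apply[OF ab(3) Bij_in[OF ab(4) w(1)]] by simp
    then show ?thesis using inv_into_eq_iff[OF ab(3) Bij_in[OF ab(4) w(1)] w(1)] w(2) by simp
  qed
  have s1: "s \<noteq> \<one>\<^bsub>BijGroup V\<^esub>"
  proof
    assume "s = \<one>\<^bsub>BijGroup V\<^esub>"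
    then have "b = a" unfolding s_def using ac
      by (metis H.inv_closed H.inv_equality H.inv_inv)
    then show False using anb by simp
  qed
  have t1: "t \<noteq> \<one>\<^bsub>BijGroup V\<^esub>"
  proof
    assume "t = \<one>\<^bsub>BijGroup V\<^esub>"
    then have "d = c" unfolding t_def using ac
      by (metis H.inv_closed H.inv_equality H.inv_inv)
    then show False using cnd by simp
  qed
  have s'w: "s' w = w"
  proof -
    have ks: "k \<otimes>\<^bsub>BijGroup V\<^esub> s \<in> Bij V" using H.m_closed[OF kc sb(2)] by (simp only: carr_Bij)
    have ikw: "(inv\<^bsub>BijGroup V\<^esub> k) w = v"
      using inv_apply[OF kb w(1)] inv_into_eq_iff[OF kb w(1) v(1)] k(2) by simp
    have "s' w = (k \<otimes>\<^bsub>BijGroup V\<^esub> s) ((inv\<^bsub>BijGroup V\<^esub> k) w)"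
      unfolding s'_def using mult_apply[OF ks iab(3) w(1)] .
    also have "\<dots> = k (s v)" using ikw mult_apply[OF kb sb(1) v(1)] by simp
    finally show ?thesis using sv k(2) by simp
  qed
  have s'1: "s' \<noteq> \<one>\<^bsub>BijGroup V\<^esub>"
  proof
    assume "s' = \<one>\<^bsub>BijGroup V\<^esub>"
    then have "k \<otimes>\<^bsub>BijGroup V\<^esub> s = k" unfolding s'_def using kc sb(2)
      by (metis H.inv_closed H.inv_equality H.inv_inv H.m_closed)
    then have "s = \<one>\<^bsub>BijGroup V\<^esub>" using kc sb(2) by simp
    then show False using s1 by simp
  qed
  have Sfin: "finite (stabilizer V G w)" using assms(2) by (simp add: stabilizer_def)
  have Ssub: "stabilizer V G w \<subseteq> carrier (BijGroup V)" using GC by (auto simp: stabilizer_def)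
  have "t = s' \<or> t = inv\<^bsub>BijGroup V\<^esub> s'"
    using H.stab23[OF Ssub Sfin stab_props(1)[OF sg w(1)] stab_props(2)[OF sg w(1)] stab_props(3)[OF sg w(1)]
       assms(5)[rule_format, OF w(1)], of s' t] s'G tG s'w tw s'1 t1
    by (simp add: stabilizer_def)
  then show "\<exists>\<sigma>. graph_automorphism G (compl_derangement_adj V) \<sigma> \<and> \<sigma> a = c \<and> \<sigma> b = d"
  proof
    assume ts: "t = s'"
    define p where "p = c \<otimes>\<^bsub>BijGroup V\<^esub> k \<otimes>\<^bsub>BijGroup V\<^esub> inv\<^bsub>BijGroup V\<^esub> a"
    define q where "q = inv\<^bsub>BijGroup V\<^esub> k"
    have pG: "p \<in> G" "q \<in> G" unfolding p_def q_def using sg G4 k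
      by (blast intro: subgroup.m_closed subgroup.m_inv_closed)+
    show ?thesis
    proof (intro exI conjI)
      show "graph_automorphism G (compl_derangement_adj V) (\<lambda>x. p \<otimes>\<^bsub>BijGroup V\<^esub> x \<otimes>\<^bsub>BijGroup V\<^esub> q)"
        using aut_mult[OF sg pG] .
      show "p \<otimes>\<^bsub>BijGroup V\<^esub> a \<otimes>\<^bsub>BijGroup V\<^esub> q = c"
        unfolding p_def q_def using H.alg1[OF ac(1) ac(3) kc] .
      show "p \<otimes>\<^bsub>BijGroup V\<^esub> b \<otimes>\<^bsub>BijGroup V\<^esub> q = d"
        unfolding p_def q_def using H.alg2[OF ac kc] ts unfolding t_def s'_def s_def by simp
    qed
  next
    assume ts: "t = inv\<^bsub>BijGroup V\<^esub> s'"
    define p where "p = c \<otimes>\<^bsub>BijGroup V\<^esub> k"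
    define q where "q = a \<otimes>\<^bsub>BijGroup V\<^esub> inv\<^bsub>BijGroup V\<^esub> k"
    have pG: "p \<in> G" "q \<in> G" unfolding p_def q_def using sg G4 k
      by (blast intro: subgroup.m_closed subgroup.m_inv_closed)+
    show ?thesis
    proof (intro exI conjI)
      show "graph_automorphism G (compl_derangement_adj V)
         ((\<lambda>x. p \<otimes>\<^bsub>BijGroup V\<^esub> x \<otimes>\<^bsub>BijGroup V\<^esub> q) \<circ> (\<lambda>x. inv\<^bsub>BijGroup V\<^esub> x))"
        using aut_comp[OF aut_mult[OF sg pG] aut_inv[OF sg]] .
      show "((\<lambda>x. p \<otimes>\<^bsub>BijGroup V\<^esub> x \<otimes>\<^bsub>BijGroup V\<^esub> q) \<circ> (\<lambda>x. inv\<^bsub>BijGroup V\<^esub> x)) a = c"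
        unfolding p_def q_def using H.alg3[OF ac(1) ac(3) kc] by simp
      show "((\<lambda>x. p \<otimes>\<^bsub>BijGroup V\<^esub> x \<otimes>\<^bsub>BijGroup V\<^esub> q) \<circ> (\<lambda>x. inv\<^bsub>BijGroup V\<^esub> x)) b = d"
        unfolding p_def q_def using H.alg4[OF ac kc] ts unfolding t_def s'_def s_def by simp
    qed
  qed
qed

end
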